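(* Let $A\in\mathbb{R}^{m\times n}$, $y\in\mathbb{R}^m$, $\lambda>0$, and let $x^\star$ be a global minimizer of $$\min_{x\in\mathbb{R}^n}\ \frac{1}{2\lambda}\|Ax-y\|^2+\|Lx\|_{1,2}.$$ Let $\beta^\star=-\frac{1}{\lambda}A^\top(Ax^\star-y)$, let $\widehat{L}=L-P_{T_z}LP_{T_x^\perp}$ be the effective lifting operator associated with $x^\star$, let $\widehat{u}_{\min}=\widehat{L}(\widehat{L}^\top\widehat{L})^{-1}\beta^\star$, and define the OGN certificate $u^\dagger\in\mathbb{R}^p$ blockwise by $u^\dagger_{J_t}=(\widehat{u}_{\min})_{J_t}$ if $x^\star_{G_t}=0$, and $u^\dagger_{J_t}=x^\star_{G_t}/\|x^\star_{G_t}\|$ if $x^\star_{G_t}\neq 0$. Then $L^\top u^\dagger=\beta^\star$. Moreover, for every $t\in\{1,\dots,N\}$, if $\|u^\dagger_{J_t}\|<1$ then $x^\star_{G_t}=0$.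
   Context: Let $n,N\in\mathbb{N}$ and let $G_1,\dots,G_N\subseteq\{1,\dots,n\}$ be nonempty groups, possibly overlapping, with $\bigcup_i G_i=\{1,\dots,n\}$, and weights $w_1,\dots,w_N>0$. For $x\in\mathbb{R}^n$ and $G\subseteq\{1,\dots,n\}$, $x_G\in\mathbb{R}^{|G|}$ is the subvector of entries indexed by $G$ (increasing order). Let $p=\sum_i|G_i|$ and partition $\{1,\dots,p\}$ into consecutive blocks $J_i=\{\sum_{j<i}|G_j|+1,\dots,\sum_{j\le i}|G_j|\}$, $i=1,\dots,N$. The lifting operator $L\in\mathbb{R}^{p\times n}$ is defined by $(Lx)_{J_i}=w_ix_{G_i}$. For $z\in\mathbb{R}^p$, $\|z\|_{1,2}=\sum_{i=1}^N\|z_{J_i}\|$ (Euclidean norms), so $\|Lx\|_{1,2}=\sum_i w_i\|x_{G_i}\|$. For a point $x\in\mathbb{R}^n$: $\mathcal{I}_x=\{t:\ x_{G_t}\neq 0\}$; $\mathcal{E}_x=\{1,\dots,n\}\setminus\bigcup_{t\notin\mathcal{I}_x}G_t$ and $T_x=\{x'\in\mathbb{R}^n:\mathrm{supp}(x')\subseteq\mathcal{E}_x\}$; $\mathcal{E}_z=\bigcup_{t\in\mathcal{I}_x}J_t$ and $T_z=\{z'\in\mathbb{R}^p:\mathrm{supp}(z')\subseteq\mathcal{E}_z\}$. $P_T$ denotes the orthogonal projection onto a coordinate subspace $T$ (which zeroes the coordinates outside the corresponding index set) and $T^\perp$ its orthogonal complement. The effective lifting operator associated with $x$ is $\widehat{L}=L-P_{T_z}LP_{T_x^\perp}$;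 here $\widehat{L}^\top\widehat{L}$ is invertible. *)

theory Defs
  imports "HOL-Analysis.Analysis"
begin

text \<open>Coordinates of R^n are indexed by a finite type 'n, group indices by a finite
type 'g (so N = CARD('g)).  The lifted space R^p, p = sum_t |G_t|, is represented by
functions on index pairs (t, j) with j \<in> G t; the block J_t is {(t, j). j \<in> G t}.
Values at pairs (t, j) with j \<notin> G t are irrelevant (kept 0 by all operators).\<close>

definition lift :: "('g \<Rightarrow> 'n set) \<Rightarrow> ('g \<Rightarrow> real) \<Rightarrow> real^'n \<Rightarrow> ('g \<times> 'n \<Rightarrow> real)" where
  "lift G w x = (\<lambda>(t, j). if j \<in> G t then w t * x $ j else 0)"

definition lift_adj :: "('g::finite \<Rightarrow> 'n set) \<Rightarrow> ('g \<Rightarrow> real) \<Rightarrow> ('g \<times> 'n \<Rightarrow> real) \<Rightarrow> real^'n" where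
  "lift_adj G w z = (\<chi> j. \<Sum>t | j \<in> G t. w t * z (t, j))"

definition block_norm :: "('g \<Rightarrow> 'n::finite set) \<Rightarrow> ('g \<times> 'n \<Rightarrow> real) \<Rightarrow> 'g \<Rightarrow> real" where
  "block_norm G z t = sqrt (\<Sum>j\<in>G t. (z (t, j))\<^sup>2)"

definition sub_norm :: "real^'n \<Rightarrow> 'n set \<Rightarrow> real" where
  "sub_norm x S = sqrt (\<Sum>j\<in>S. (x $ j)\<^sup>2)"

definition norm12 :: "('g::finite \<Rightarrow> 'n::finite set) \<Rightarrow> ('g \<times> 'n \<Rightarrow> real) \<Rightarrow> real" where
  "norm12 G z = (\<Sum>t\<in>UNIV. block_norm G z t)"

definition objective ::
  "real^'n^'m \<Rightarrow> real^'m \<Rightarrow> real \<Rightarrow> ('g::finite \<Rightarrow> 'n::finite set) \<Rightarrow> ('g \<Rightarrow> real) \<Rightarrow> real^'n \<Rightarrow> real" where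
  "objective A y lam G w x = 1 / (2 * lam) * (norm (A *v x - y))\<^sup>2 + norm12 G (lift G w x)"

definition active_groups :: "('g \<Rightarrow> 'n set) \<Rightarrow> real^'n \<Rightarrow> 'g set" where
  "active_groups G x = {t. \<exists>j\<in>G t. x $ j \<noteq> 0}"

definition Ex :: "('g \<Rightarrow> 'n set) \<Rightarrow> real^'n \<Rightarrow> 'n set" where
  "Ex G x = UNIV - (\<Union>t\<in>- active_groups G x. G t)"

definition Ez :: "('g \<Rightarrow> 'n set) \<Rightarrow> real^'n \<Rightarrow> ('g \<times> 'n) set" where
  "Ez G x = {(t, j). t \<in> active_groups G x \<and> j \<in> G t}"

text \<open>Orthogonal projection onto T_x^perp (zeroes the coordinates in E_x).\<close>
definition proj_Tx_perp :: "('g \<Rightarrow> 'n set) \<Rightarrow> real^'n \<Rightarrow> real^'n \<Rightarrow> real^'n" where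
  "proj_Tx_perp G x v = (\<chi> j. if j \<in> Ex G x then 0 else v $ j)"

text \<open>Orthogonal projection onto T_z (zeroes the coordinates outside E_z).\<close>
definition proj_Tz :: "('g \<Rightarrow> 'n set) \<Rightarrow> real^'n \<Rightarrow> ('g \<times> 'n \<Rightarrow> real) \<Rightarrow> ('g \<times> 'n \<Rightarrow> real)" where
  "proj_Tz G x z = (\<lambda>k. if k \<in> Ez G x then z k else 0)"

definition eff_lift :: "('g \<Rightarrow> 'n set) \<Rightarrow> ('g \<Rightarrow> real) \<Rightarrow> real^'n \<Rightarrow> real^'n \<Rightarrow> ('g \<times> 'n \<Rightarrow> real)" where
  "eff_lift G w x v = (\<lambda>k. lift G w v k - proj_Tz G x (lift G w (proj_Tx_perp G x v)) k)"

text \<open>Its transpose Lhat^T = L^T - P_{T_x^perp} L^T P_{T_z} (projections are symmetric).\<close>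
definition eff_lift_adj :: "('g::finite \<Rightarrow> 'n set) \<Rightarrow> ('g \<Rightarrow> real) \<Rightarrow> real^'n \<Rightarrow> ('g \<times> 'n \<Rightarrow> real) \<Rightarrow> real^'n" where
  "eff_lift_adj G w x z = lift_adj G w z - proj_Tx_perp G x (lift_adj G w (proj_Tz G x z))"

definition u_hat_min :: "('g::finite \<Rightarrow> 'n::finite set) \<Rightarrow> ('g \<Rightarrow> real) \<Rightarrow> real^'n \<Rightarrow> real^'n \<Rightarrow> ('g \<times> 'n \<Rightarrow> real)" where
  "u_hat_min G w x beta =
     eff_lift G w x (matrix_inv (matrix (\<lambda>v. eff_lift_adj G w x (eff_lift G w x v))) *v beta)"

definition ogn_cert :: "('g::finite \<Rightarrow> 'n::finite set) \<Rightarrow> ('g \<Rightarrow> real) \<Rightarrow> real^'n \<Rightarrow> real^'n \<Rightarrow> ('g \<times> 'n \<Rightarrow> real)" where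
  "ogn_cert G w x beta = (\<lambda>(t, j).
     if j \<notin> G t then 0
     else if (\<forall>i\<in>G t. x $ i = 0) then u_hat_min G w x beta (t, j)
     else x $ j / sub_norm x (G t))"

end

theory Submission
  imports Defs
begin

definition cc :: "('g::finite \<Rightarrow> 'n set) \<Rightarrow> ('g \<Rightarrow> real) \<Rightarrow> real^'n \<Rightarrow> 'n \<Rightarrow> real" where
  "cc G w x j = (if j \<in> Ex G x then (\<Sum>t | j \<in> G t. (w t)\<^sup>2)
     else (\<Sum>t | j \<in> G t \<and> t \<notin> active_groups G x. (w t)\<^sup>2))"

lemma sum_filter_eq:
  fixes f :: "'g::finite \<Rightarrow> real"
  shows "(\<Sum>t | P t \<and> Q t. f t) = (\<Sum>t | P t. if Q t then f t else 0)"
proof -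
  have "{t. P t \<and> Q t} = {t \<in> {t. P t}. Q t}" by auto
  show ?thesis unfolding \<open>{t. P t \<and> Q t} = {t \<in> {t. P t}. Q t}\<close>
    by (rule sum.inter_filter) simp
qed

lemma eff_comp:
  "eff_lift_adj G w x (eff_lift G w x v) = (\<chi> j. cc G w x j * v $ j)"
proof -
  have "eff_lift_adj G w x (eff_lift G w x v) $ j = cc G w x j * v $ j" for j
  proof (cases "j \<in> Ex G x")
    case True
    then have "eff_lift_adj G w x (eff_lift G w x v) $ j = (\<Sum>t | j \<in> G t. w t * eff_lift G w x v (t, j))"
      by (simp add: eff_lift_adj_def lift_adj_def proj_Tx_perp_def)
    also have "\<dots> = (\<Sum>t | j \<in> G t. (w t)\<^sup>2 * v $ j)"
      using True by (intro sum.cong) (auto simp: eff_lift_def lift_def proj_Tz_def proj_Tx_perp_def power2_eq_square)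
    finally show ?thesis using True by (simp add: cc_def sum_distrib_right)
  next
    case False
    have "eff_lift_adj G w x (eff_lift G w x v) $ j =
      (\<Sum>t | j \<in> G t. w t * eff_lift G w x v (t, j)) -
      (\<Sum>t | j \<in> G t. w t * (if (t, j) \<in> Ez G x then eff_lift G w x v (t, j) else 0))"
      using False by (simp add: eff_lift_adj_def lift_adj_def proj_Tx_perp_def proj_Tz_def)
    also have "\<dots> = (\<Sum>t | j \<in> G t. if t \<notin> active_groups G x then (w t)\<^sup>2 * v $ j else 0)"
      unfolding sum_subtractf[symmetric]
      by (rule sum.cong) (auto simp: Ez_def eff_lift_def lift_def proj_Tz_def power2_eq_square)
    also have "\<dots> = cc G w x j * v $ j"
      using False by (auto simp add: cc_def sum_filter_eq sum_distrib_right intro!: sum.cong)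
    finally show ?thesis .
  qed
  then show ?thesis by (simp add: vec_eq_iff)
qed

definition diagm :: "('n::finite \<Rightarrow> real) \<Rightarrow> real^'n^'n" where
  "diagm c = (\<chi> i k. if i = k then c i else 0)"

lemma diagm_mult: "diagm c *v v = (\<chi> i. c i * v $ i)"
proof -
  have "(\<Sum>j\<in>UNIV. (if i = j then c i else 0) * v $ j) = c i * v $ i" for i
    by (simp add: if_distrib[of "\<lambda>a. a * _"] cong: if_cong)
  then show ?thesis by (simp add: vec_eq_iff diagm_def matrix_vector_mult_def)
qed

lemma diagm_mm: "diagm c ** diagm d = diagm (\<lambda>i. c i * d i)"
proof -
  have "(\<Sum>j\<in>UNIV. (if i = j then c i else 0) * (if j = k then d j else 0)) = (if i = k then c i * d i else 0)" for i k
    by (simp add: if_distrib[of "\<lambda>a. a * _"] cong: if_cong)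
  then show ?thesis by (simp add: vec_eq_iff diagm_def matrix_matrix_mult_def)
qed

lemma diagm_one: "diagm (\<lambda>i. 1) = mat 1"
  by (simp add: vec_eq_iff diagm_def mat_def)

lemma uhat_prop:
  assumes "\<forall>j. cc G w x j \<noteq> 0"
  shows "eff_lift_adj G w x (u_hat_min G w x beta) = beta"
proof -
  define D where "D = diagm (cc G w x)"
  define D' where "D' = diagm (\<lambda>i. 1 / cc G w x i)"
  have f: "(\<lambda>v. eff_lift_adj G w x (eff_lift G w x v)) = (\<lambda>v. D *v v)"
    by (simp add: eff_comp D_def diagm_mult)
  have M: "matrix (\<lambda>v. eff_lift_adj G w x (eff_lift G w x v)) = D"
    unfolding f by (rule matrix_of_matrix_vector_mul)
  have "D ** D' = mat 1 \<and> D' ** D = mat 1"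
    using assms by (simp add: D_def D'_def diagm_mm diagm_one[symmetric])
  then have "\<exists>A'. D ** A' = mat 1 \<and> A' ** D = mat 1" by blast
  then have inv: "D ** matrix_inv D = mat 1"
    unfolding matrix_inv_def by (rule someI_ex[THEN conjunct1])
  have "eff_lift_adj G w x (u_hat_min G w x beta) = D *v (matrix_inv D *v beta)"
    unfolding u_hat_min_def M by (subst f[THEN fun_cong, symmetric]) simp
  also have "\<dots> = beta" by (simp add: matrix_vector_mul_assoc inv)
  finally show ?thesis .
qed

lemma inner_axis_col: "(r::real^'m) \<bullet> ((A::real^'n^'m) *v axis j 1) = (transpose A *v r) $ j"
  by (simp add: inner_vec_def matrix_vector_mult_def transpose_def axis_def mult.commute if_distrib[of "\<lambda>a. _ * a"] cong: if_cong)

lemma norm_sq_expand: "norm (r + s *\<^sub>R (a::real^'m))^2 = r \<bullet> r + 2 * s * (r \<bullet> a) + s^2 * (a \<bullet> a)"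
  unfolding power2_norm_eq_inner
  by (simp add: inner_add_left inner_add_right inner_commute power2_eq_square algebra_simps)

lemma sqrt_scaled: "sqrt (\<Sum>i\<in>S. (c * (x::real^'n) $ i)\<^sup>2) = \<bar>c\<bar> * sub_norm x S"
proof -
  have "(\<Sum>i\<in>S. (c * x $ i)\<^sup>2) = c\<^sup>2 * (\<Sum>i\<in>S. (x $ i)\<^sup>2)"
    by (simp add: sum_distrib_left power_mult_distrib)
  then show ?thesis by (simp add: sub_norm_def real_sqrt_mult)
qed

lemma block_deriv:
  fixes x :: "real^'n::finite"
  assumes "j \<in> S" "0 < (\<Sum>i\<in>S. (c * x $ i)\<^sup>2)" "c > 0"
  shows "((\<lambda>s. sqrt (\<Sum>i\<in>S. (c * (x $ i + s * axis j 1 $ i))\<^sup>2)) has_real_derivative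
           (c * x $ j / sub_norm x S)) (at 0)"
proof -
  let ?S0 = "\<Sum>i\<in>S. (c * x $ i)\<^sup>2"
  have fin: "finite S" by simp
  have inner: "((\<lambda>s. \<Sum>i\<in>S. (c * (x $ i + s * axis j 1 $ i))\<^sup>2) has_real_derivative
           (2 * c\<^sup>2 * x $ j)) (at 0)"
  proof -
    have "((\<lambda>s. \<Sum>i\<in>S. (c * (x $ i + s * axis j 1 $ i))\<^sup>2) has_real_derivative
           (\<Sum>i\<in>S. 2 * c\<^sup>2 * x $ i * axis j 1 $ i)) (at 0)"
      by (rule derivative_eq_intros refl | simp add: power2_eq_square algebra_simps)+
    moreover have "(\<Sum>i\<in>S. 2 * c\<^sup>2 * x $ i * axis j 1 $ i) = 2 * c\<^sup>2 * x $ j"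
      using assms(1) by (simp add: axis_def if_distrib[of "\<lambda>a. _ * a"] cong: if_cong)
    ultimately show ?thesis by simp
  qed
  have sq: "DERIV sqrt ?S0 :> inverse (sqrt ?S0) / 2"
    using assms(2) by (rule DERIV_real_sqrt)
  have "((\<lambda>s. sqrt (\<Sum>i\<in>S. (c * (x $ i + s * axis j 1 $ i))\<^sup>2)) has_real_derivative
           (inverse (sqrt ?S0) / 2 * (2 * c\<^sup>2 * x $ j))) (at 0)"
  proof -
    have g0: "(\<Sum>i\<in>S. (c * (x $ i + 0 * axis j 1 $ i))\<^sup>2) = ?S0" by simp
    have sq': "DERIV sqrt (\<Sum>i\<in>S. (c * (x $ i + 0 * axis j 1 $ i))\<^sup>2) :> inverse (sqrt ?S0) / 2"
      using sq unfolding g0 .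
    show ?thesis using DERIV_chain2[OF sq' inner] by simp
  qed
  moreover have "sqrt ?S0 = c * sub_norm x S" using sqrt_scaled[of c x S] assms(3) by simp
  moreover have "c * sub_norm x S > 0" using assms(2,3) \<open>sqrt ?S0 = c * sub_norm x S\<close>
    by (metis real_sqrt_gt_0_iff)
  ultimately show ?thesis
    using assms(3) by (simp add: field_simps power2_eq_square)
qed

lemma Ex_case:
  fixes A :: "real^'n::finite^'m::finite" and G :: "'g::finite \<Rightarrow> 'n set"
  assumes lam: "lam > 0" and wpos: "\<forall>t. w t > 0"
    and opt: "\<forall>x. objective A y lam G w xs \<le> objective A y lam G w x"
    and jE: "j \<in> Ex G xs"
  shows "(- (1 / lam) *\<^sub>R (transpose A *v (A *v xs - y))) $ j =
         (\<Sum>t | j \<in> G t. w t * (xs $ j / sub_norm xs (G t)))"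
proof -
  define e :: "real^'n" where "e = axis j 1"
  define r where "r = A *v xs - y"
  define a where "a = A *v e"
  define h where "h = (\<lambda>t s. sqrt (\<Sum>i\<in>G t. (w t * (xs $ i + s * e $ i))\<^sup>2))"
  define d where "d t = (if j \<in> G t then w t * xs $ j / sub_norm xs (G t) else 0)" for t
  define q where "q s = 1 / (2 * lam) * (r \<bullet> r + 2 * s * (r \<bullet> a) + s\<^sup>2 * (a \<bullet> a))" for s
  have obj_eq: "objective A y lam G w (xs + s *\<^sub>R e) = q s + (\<Sum>t\<in>UNIV. h t s)" for s
  proof -
    have "A *v (xs + s *\<^sub>R e) - y = r + s *\<^sub>R a"
      by (simp add: r_def a_def matrix_vector_right_distrib matrix_vector_mult_scaleR)
    moreover have "norm12 G (lift G w (xs + s *\<^sub>R e)) = (\<Sum>t\<in>UNIV. h t s)"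
      unfolding norm12_def block_norm_def h_def
      by (intro sum.cong refl arg_cong[where f=sqrt]) (auto simp: lift_def)
    ultimately show ?thesis
      by (simp add: objective_def q_def norm_sq_expand)
  qed
  have hd: "(h t has_real_derivative d t) (at 0)" for t
  proof (cases "j \<in> G t")
    case True
    then have "t \<in> active_groups G xs" using jE by (auto simp: Ex_def)
    then obtain i where i: "i \<in> G t" "xs $ i \<noteq> 0" by (auto simp: active_groups_def)
    have pos: "0 < (\<Sum>i\<in>G t. (w t * xs $ i)\<^sup>2)"
    proof -
      have "w t > 0" using wpos by simp
      then show ?thesis by (intro sum_pos2[OF _ i(1)]) (use i in auto)
    qed
    have "((\<lambda>s. sqrt (\<Sum>i\<in>G t. (w t * (xs $ i + s * axis j 1 $ i))\<^sup>2)) has_real_derivative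
           (w t * xs $ j / sub_norm xs (G t))) (at 0)"
      by (rule block_deriv[OF True pos]) (use wpos in auto)
    then show ?thesis using True by (simp add: h_def d_def e_def)
  next
    case False
    then have "h t = (\<lambda>s. h t 0)"
      by (auto simp: h_def e_def axis_def intro!: sum.cong arg_cong[where f=sqrt])
    then show ?thesis using False by (metis DERIV_const d_def)
  qed
  have qd: "(q has_real_derivative (r \<bullet> a) / lam) (at 0)"
    unfolding q_def
    by (rule derivative_eq_intros refl | use lam in \<open>simp add: field_simps\<close>)+
  have tot: "((\<lambda>s. objective A y lam G w (xs + s *\<^sub>R e)) has_real_derivative
              ((r \<bullet> a) / lam + (\<Sum>t\<in>UNIV. d t))) (at 0)"
    unfolding obj_eq
    by (intro DERIV_add qd DERIV_sum hd)
  have zero: "(r \<bullet> a) / lam + (\<Sum>t\<in>UNIV. d t) = 0"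
    using opt by (intro DERIV_local_min[OF tot, of 1]) auto
  have ra: "r \<bullet> a = (transpose A *v r) $ j"
    unfolding a_def e_def by (rule inner_axis_col)
  have "(\<Sum>t\<in>UNIV. d t) = (\<Sum>t | j \<in> G t. w t * (xs $ j / sub_norm xs (G t)))"
  proof -
    have "{t. j \<in> G t} = {t \<in> UNIV. j \<in> G t}" by simp
    then show ?thesis unfolding d_def
      by (simp only: sum.inter_filter[OF finite]) (auto intro!: sum.cong)
  qed
  then show ?thesis using zero ra lam unfolding r_def
    by (simp add: field_simps)
qed

theorem proposition3p6:
  fixes A :: "real^'n::finite^'m::finite" and y :: "real^'m" and lam :: real
    and G :: "'g::finite \<Rightarrow> 'n set" and w :: "'g \<Rightarrow> real" and xs :: "real^'n"
  assumes "lam > 0"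
    and "\<forall>t. G t \<noteq> {}"
    and "(\<Union>t. G t) = UNIV"
    and "\<forall>t. w t > 0"
    and "\<forall>x. objective A y lam G w xs \<le> objective A y lam G w x"
  defines "beta \<equiv> - (1 / lam) *\<^sub>R (transpose A *v (A *v xs - y))"
  shows "lift_adj G w (ogn_cert G w xs beta) = beta \<and>
         (\<forall>t. block_norm G (ogn_cert G w xs beta) t < 1 \<longrightarrow> (\<forall>j\<in>G t. xs $ j = 0))"
proof -
  let ?u = "ogn_cert G w xs beta"
  note wpos = assms(4)
  have inact: "(\<forall>i\<in>G t. xs $ i = 0) \<longleftrightarrow> t \<notin> active_groups G xs" for t
    by (auto simp: active_groups_def)
  have cpos: "\<forall>j. cc G w xs j \<noteq> 0"
  proof
    fix j
    have "0 < cc G w xs j"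
    proof (cases "j \<in> Ex G xs")
      case True
      obtain t where "j \<in> G t" using assms(3) by blast
      then show ?thesis using True wpos
        by (simp add: cc_def, intro sum_pos) (auto simp: wpos less_imp_neq[OF spec[OF wpos], symmetric])
    next
      case False
      then obtain t where "j \<in> G t" "t \<notin> active_groups G xs" by (auto simp: Ex_def)
      then show ?thesis using False wpos
        by (simp add: cc_def, intro sum_pos) (auto simp: wpos less_imp_neq[OF spec[OF wpos], symmetric])
    qed
    then show "cc G w xs j \<noteq> 0" by simp
  qed
  have snpos: "sub_norm xs (G t) > 0" if ta: "t \<in> active_groups G xs" for t
  proof -
    obtain i where i: "i \<in> G t" "xs $ i \<noteq> 0" using ta by (auto simp: active_groups_def)
    have "0 < (\<Sum>i\<in>G t. (xs $ i)\<^sup>2)"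
      by (intro sum_pos2[OF _ i(1)]) (use i in auto)
    then show ?thesis by (simp add: sub_norm_def)
  qed
  have part1: "lift_adj G w ?u $ j = beta $ j" for j
  proof (cases "j \<in> Ex G xs")
    case True
    have "lift_adj G w ?u $ j = (\<Sum>t | j \<in> G t. w t * (xs $ j / sub_norm xs (G t)))"
    proof -
      have "t \<in> active_groups G xs" if "j \<in> G t" for t using True that by (auto simp: Ex_def)
      then show ?thesis unfolding lift_adj_def ogn_cert_def
        by (auto simp: inact intro!: sum.cong)
    qed
    also have "\<dots> = beta $ j" unfolding beta_def
      by (rule Ex_case[OF assms(1) wpos assms(5) True, symmetric])
    finally show ?thesis .
  next
    case False
    then obtain t0 where t0: "j \<in> G t0" "t0 \<notin> active_groups G xs" by (auto simp: Ex_def)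
    then have xj: "xs $ j = 0" by (auto simp: active_groups_def)
    have "lift_adj G w ?u $ j =
       (\<Sum>t | j \<in> G t. w t * (if t \<in> active_groups G xs then 0 else u_hat_min G w xs beta (t, j)))"
      unfolding lift_adj_def ogn_cert_def
      by (auto simp: inact xj intro!: sum.cong)
    also have "\<dots> = eff_lift_adj G w xs (u_hat_min G w xs beta) $ j"
      using False unfolding eff_lift_adj_def lift_adj_def proj_Tx_perp_def proj_Tz_def
      by (auto simp: sum_subtractf[symmetric] Ez_def intro!: sum.cong)
    also have "\<dots> = beta $ j" using uhat_prop[OF cpos] by simp
    finally show ?thesis .
  qed
  have part2: "\<forall>j\<in>G t. xs $ j = 0" if "block_norm G ?u t < 1" for t
  proof (rule ccontr)
    assume "\<not> (\<forall>j\<in>G t. xs $ j = 0)"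
    then have act: "t \<in> active_groups G xs" using inact by blast
    have sn: "sub_norm xs (G t) > 0" by (rule snpos[OF act])
    have "(\<Sum>j\<in>G t. (?u (t, j))\<^sup>2) = (\<Sum>j\<in>G t. (xs $ j)\<^sup>2) / (sub_norm xs (G t))\<^sup>2"
      unfolding ogn_cert_def using act
      by (auto simp: inact power_divide sum_divide_distrib intro!: sum.cong)
    also have "(sub_norm xs (G t))\<^sup>2 = (\<Sum>j\<in>G t. (xs $ j)\<^sup>2)"
      unfolding sub_norm_def by (simp add: sum_nonneg)
    finally have "(\<Sum>j\<in>G t. (?u (t, j))\<^sup>2) = 1" using sn by (simp add: sub_norm_def)
    then have "block_norm G ?u t = 1" by (simp add: block_norm_def)
    then show False using that by simp
  qed
  show ?thesis using part1 part2 by (simp add: vec_eq_iff)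
qed

end
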